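(* Let $\mathfrak{g}_1$ and $\mathfrak{g}_2$ be characteristically nilpotent Lie algebras which are both $S$-algebras. Then the product by generators $\mathfrak{g}_1 \underline{\times} \mathfrak{g}_2$ is also a characteristically nilpotent Lie algebra.
   Context: All Lie algebras are finite-dimensional, complex, nilpotent and nonabelian. For a Lie algebra $\mathfrak{g}$ write $C^1\mathfrak{g}=[\mathfrak{g},\mathfrak{g}]$, $C^{k+1}\mathfrak{g}=[\mathfrak{g},C^k\mathfrak{g}]$, and $Z(\mathfrak{g})$ for the center. A nilpotent Lie algebra $\mathfrak{g}$ is characteristically nilpotent if there is $m$ with $\mathfrak{g}^{[m]}=0$, where $\mathfrak{g}^{[1]}=\mathrm{Der}(\mathfrak{g})(\mathfrak{g})=\{f(Y): f\in \mathrm{Der}(\mathfrak{g}), Y\in\mathfrak{g}\}$ and $\mathfrak{g}^{[k]}=\mathrm{Der}(\mathfrak{g})(\mathfrak{g}^{[k-1]})$ (equivalently, $\mathrm{Der}(\mathfrak{g})$ is nilpotent). Product by generators: let $\mathfrak{g}_1,\mathfrak{g}_2$ have dimensions $m_1,m_2$, with bases $\{X_1,\dots,X_{m_1}\}$ of $\mathfrak{g}_1$ and $\{X'_1,\dots,X'_{m_2}\}$ of $\mathfrak{g}_2$ such that $X_1,\dots,X_{n_1}$ generate $\mathfrak{g}_1$ and $X_{n_1+1},\dots,X_{m_1}$ span $C^1\mathfrak{g}_1$, and similarly $X'_1,\dots,X'_{n_2}$ generate $\mathfrak{g}_2$ and the remaining $X'_j$ span $C^1\mathfrak{g}_2$.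 Then $\mathfrak{g}_1\underline{\times}\mathfrak{g}_2$ is the Lie algebra on the vector space $\mathfrak{g}_1\oplus\mathfrak{g}_2\oplus\mathfrak{g}_3$, $\mathfrak{g}_3=\langle Z_1,\dots,Z_{n_1n_2}\rangle$, whose brackets are those of $\mathfrak{g}_1$ on $\mathfrak{g}_1$, those of $\mathfrak{g}_2$ on $\mathfrak{g}_2$, $[X_i,X'_j]=Z_{(i-1)n_2+j}$ for $1\le i\le n_1$, $1\le j\le n_2$, $[X_i,X'_j]=0$ if $i>n_1$ or $j>n_2$, and $\mathfrak{g}_3$ central (this is the central extension of $\mathfrak{g}_1\oplus\mathfrak{g}_2$ by the 2-cocycle $\varphi(X_i,X'_j)=e_{(i-1)n_2+j}$ with values in $\mathbb{C}^{n_1n_2}$). For $i=1,2,3$ let $p_i$ be the projection of $\mathfrak{g}_1\underline{\times}\mathfrak{g}_2=\mathfrak{g}_1\oplus\mathfrak{g}_2\oplus\mathfrak{g}_3$ onto $\mathfrak{g}_i$, and for a derivation $D$ write $D_{ij}=p_iDp_j$. A nilpotent Lie algebra $\mathfrak{g}_1$ is an $S$-algebra if for every Lie algebra $\mathfrak{g}_2$ and every derivation $D$ of $\mathfrak{g}_1\underline{\times}\mathfrak{g}_2$ one has $D_{21}(\mathfrak{g}_1)\subset C^1\mathfrak{g}_2$. *)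

theory Defs
  imports Complex_Main "HOL-Library.Function_Algebras"
begin

text \<open>A complex Lie algebra of dimension m is given by structure constants c with
respect to a basis e_0,...,e_(m-1); vectors are coordinate functions nat => complex
vanishing at indices >= m.  c i j k is the e_k coordinate of [e_i, e_j].\<close>

definition vecs :: "nat \<Rightarrow> (nat \<Rightarrow> complex) set" where
  "vecs m = {v. \<forall>k\<ge>m. v k = 0}"

definition unitv :: "nat \<Rightarrow> nat \<Rightarrow> complex" where
  "unitv i = (\<lambda>k. if k = i then 1 else 0)"

definition cspan :: "(nat \<Rightarrow> complex) set \<Rightarrow> (nat \<Rightarrow> complex) set" where
  "cspan S = {(\<Sum>u\<in>F. (\<lambda>k. a u * u k)) | F a. finite F \<and> F \<subseteq> S}"

definition lie_br :: "nat \<Rightarrow> (nat \<Rightarrow> nat \<Rightarrow> nat \<Rightarrow> complex)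
    \<Rightarrow> (nat \<Rightarrow> complex) \<Rightarrow> (nat \<Rightarrow> complex) \<Rightarrow> (nat \<Rightarrow> complex)" where
  "lie_br m c x y = (\<lambda>k. \<Sum>i<m. \<Sum>j<m. x i * y j * c i j k)"

definition is_lie_alg :: "nat \<Rightarrow> (nat \<Rightarrow> nat \<Rightarrow> nat \<Rightarrow> complex) \<Rightarrow> bool" where
  "is_lie_alg m c \<longleftrightarrow>
     (\<forall>i j k. (m \<le> i \<or> m \<le> j \<or> m \<le> k) \<longrightarrow> c i j k = 0) \<and>
     (\<forall>i j k. c i j k = - c j i k) \<and>
     (\<forall>x\<in>vecs m. \<forall>y\<in>vecs m. \<forall>z\<in>vecs m.
        lie_br m c x (lie_br m c y z) + lie_br m c y (lie_br m c z x)
          + lie_br m c z (lie_br m c x y) = 0)"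

primrec lcs :: "nat \<Rightarrow> (nat \<Rightarrow> nat \<Rightarrow> nat \<Rightarrow> complex) \<Rightarrow> nat \<Rightarrow> (nat \<Rightarrow> complex) set" where
  "lcs m c 0 = vecs m"
| "lcs m c (Suc k) = cspan {lie_br m c x y | x y. x \<in> vecs m \<and> y \<in> lcs m c k}"

definition lie_nilpotent :: "nat \<Rightarrow> (nat \<Rightarrow> nat \<Rightarrow> nat \<Rightarrow> complex) \<Rightarrow> bool" where
  "lie_nilpotent m c \<longleftrightarrow> (\<exists>k. lcs m c k = {0})"

definition lie_nonabelian :: "nat \<Rightarrow> (nat \<Rightarrow> nat \<Rightarrow> nat \<Rightarrow> complex) \<Rightarrow> bool" where
  "lie_nonabelian m c \<longleftrightarrow> lcs m c 1 \<noteq> {0}"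

definition is_derivation :: "nat \<Rightarrow> (nat \<Rightarrow> nat \<Rightarrow> nat \<Rightarrow> complex)
    \<Rightarrow> ((nat \<Rightarrow> complex) \<Rightarrow> (nat \<Rightarrow> complex)) \<Rightarrow> bool" where
  "is_derivation m c D \<longleftrightarrow>
     (\<forall>x\<in>vecs m. D x \<in> vecs m) \<and>
     (\<forall>a x y. x \<in> vecs m \<longrightarrow> y \<in> vecs m \<longrightarrow>
        D (\<lambda>k. a * x k + y k) = (\<lambda>k. a * D x k + D y k)) \<and>
     (\<forall>x\<in>vecs m. \<forall>y\<in>vecs m.
        D (lie_br m c x y) = lie_br m c (D x) y + lie_br m c x (D y))"

primrec der_series :: "nat \<Rightarrow> (nat \<Rightarrow> nat \<Rightarrow> nat \<Rightarrow> complex) \<Rightarrow> nat \<Rightarrow> (nat \<Rightarrow> complex) set" where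
  "der_series m c 0 = vecs m"
| "der_series m c (Suc k) = {D y | D y. is_derivation m c D \<and> y \<in> der_series m c k}"

definition char_nilpotent :: "nat \<Rightarrow> (nat \<Rightarrow> nat \<Rightarrow> nat \<Rightarrow> complex) \<Rightarrow> bool" where
  "char_nilpotent m c \<longleftrightarrow> is_lie_alg m c \<and> lie_nilpotent m c \<and>
     (\<exists>k\<ge>1. der_series m c k = {0})"

text \<open>Adapted basis: e_0..e_(n-1) generate, e_n..e_(m-1) span C^1.\<close>
definition adapted :: "nat \<Rightarrow> nat \<Rightarrow> (nat \<Rightarrow> nat \<Rightarrow> nat \<Rightarrow> complex) \<Rightarrow> bool" where
  "adapted m n c \<longleftrightarrow> n \<le> m \<and> lcs m c 1 = cspan (unitv ` {n..<m})"

text \<open>Product by generators. Coordinates: [0,m1) for g1, [m1,m1+m2) for g2,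
  m1+m2+i*n2+j for Z corresponding to [X_i, X'_j] (0-based, i<n1, j<n2).\<close>
definition prod_gen :: "nat \<Rightarrow> nat \<Rightarrow> (nat \<Rightarrow> nat \<Rightarrow> nat \<Rightarrow> complex)
    \<Rightarrow> nat \<Rightarrow> nat \<Rightarrow> (nat \<Rightarrow> nat \<Rightarrow> nat \<Rightarrow> complex) \<Rightarrow> (nat \<Rightarrow> nat \<Rightarrow> nat \<Rightarrow> complex)" where
  "prod_gen m1 n1 c1 m2 n2 c2 = (\<lambda>i j k.
     if i < m1 \<and> j < m1 \<and> k < m1 then c1 i j k
     else if m1 \<le> i \<and> i < m1 + m2 \<and> m1 \<le> j \<and> j < m1 + m2 \<and> m1 \<le> k \<and> k < m1 + m2
       then c2 (i - m1) (j - m1) (k - m1)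
     else if i < n1 \<and> m1 \<le> j \<and> j < m1 + n2 \<and> k = m1 + m2 + i * n2 + (j - m1) then 1
     else if j < n1 \<and> m1 \<le> i \<and> i < m1 + n2 \<and> k = m1 + m2 + j * n2 + (i - m1) then -1
     else 0)"

definition prod_dim :: "nat \<Rightarrow> nat \<Rightarrow> nat \<Rightarrow> nat \<Rightarrow> nat" where
  "prod_dim m1 n1 m2 n2 = m1 + m2 + n1 * n2"

definition proj2 :: "nat \<Rightarrow> nat \<Rightarrow> (nat \<Rightarrow> complex) \<Rightarrow> (nat \<Rightarrow> complex)" where
  "proj2 m1 m2 v = (\<lambda>k. if k < m2 then v (m1 + k) else 0)"

text \<open>Vectors of g1
  (coordinates < m1) are literally vectors of the product.\<close>
definition S_algebra :: "nat \<Rightarrow> nat \<Rightarrow> (nat \<Rightarrow> nat \<Rightarrow> nat \<Rightarrow> complex) \<Rightarrow> bool" where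
  "S_algebra m1 n1 c1 \<longleftrightarrow>
     (\<forall>m2 n2 c2. is_lie_alg m2 c2 \<and> lie_nilpotent m2 c2 \<and> lie_nonabelian m2 c2
        \<and> adapted m2 n2 c2 \<longrightarrow>
       (\<forall>D. is_derivation (prod_dim m1 n1 m2 n2) (prod_gen m1 n1 c1 m2 n2 c2) D \<longrightarrow>
          (\<forall>x\<in>vecs m1. proj2 m1 m2 (D x) \<in> lcs m2 c2 1)))"

end

theory Submission
  imports Defs
begin


lemma vecs_iff: "v \<in> vecs m \<longleftrightarrow> (\<forall>k. m \<le> k \<longrightarrow> v k = 0)"
  by (auto simp: vecs_def)

lemma sum_fun_apply: "(\<Sum>u\<in>F. f u) k = (\<Sum>u\<in>F. f u k)" for f :: "'a \<Rightarrow> nat \<Rightarrow> complex"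
  by (induction F rule: infinite_finite_induct) auto

definition subsp :: "(nat \<Rightarrow> complex) set \<Rightarrow> bool" where
  "subsp S \<longleftrightarrow> 0 \<in> S \<and> (\<forall>a x y. x \<in> S \<longrightarrow> y \<in> S \<longrightarrow> (\<lambda>k. a * x k + y k) \<in> S)"

lemma subspD: "subsp S \<Longrightarrow> x \<in> S \<Longrightarrow> y \<in> S \<Longrightarrow> (\<lambda>k. a * x k + y k) \<in> S"
  by (auto simp: subsp_def)

lemma subsp_add: "subsp S \<Longrightarrow> x \<in> S \<Longrightarrow> y \<in> S \<Longrightarrow> x + y \<in> S"
  using subspD[of S x y 1] by (simp add: plus_fun_def)

lemma subsp_smul: "subsp S \<Longrightarrow> x \<in> S \<Longrightarrow> (\<lambda>k. a * x k) \<in> S"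
proof -
  assume "subsp S" "x \<in> S"
  moreover have "0 \<in> S" using \<open>subsp S\<close> unfolding subsp_def by blast
  ultimately have "(\<lambda>k. a * x k + (0::nat\<Rightarrow>complex) k) \<in> S" by (rule subspD)
  then show ?thesis by simp
qed

lemma cspan_sub:
  assumes "subsp S" "G \<subseteq> S" shows "cspan G \<subseteq> S"
proof
  fix v assume "v \<in> cspan G"
  then obtain F a where v: "v = (\<Sum>u\<in>F. (\<lambda>k. a u * u k))" and F: "finite F" "F \<subseteq> G"
    unfolding cspan_def by blast
  have "(\<Sum>u\<in>F. (\<lambda>k. a u * u k)) \<in> S" using F
  proof (induction F rule: finite_induct)
    case empty then show ?case using assms(1) unfolding subsp_def sum.empty by blast
  next
    case (insert x F)
    then have "x \<in> S" using assms(2) by auto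
    then have "(\<lambda>k. a x * x k + (\<Sum>u\<in>F. (\<lambda>k. a u * u k)) k) \<in> S"
      using subspD[OF assms(1)] insert by auto
    then show ?case using insert by (simp add: plus_fun_def)
  qed
  then show "v \<in> S" using v by simp
qed

lemma cspan_mem: "u \<in> G \<Longrightarrow> u \<in> cspan G"
  unfolding cspan_def
  by (rule CollectI, rule exI[of _ "{u}"], rule exI[of _ "\<lambda>_. 1"]) auto

lemma cspan_zero: "0 \<in> cspan G"
  unfolding cspan_def
  by (rule CollectI, rule exI[of _ "{}"], rule exI[of _ "\<lambda>_. 1"]) auto

lemma unitv_inj: "inj unitv"
proof (rule injI)
  fix x y assume "unitv x = unitv y"
  then have "unitv x x = unitv y x" by simp
  then show "x = y" by (auto simp: unitv_def split: if_splits)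
qed

lemma cspan_unit:
  assumes "finite A" "\<forall>k. k \<notin> A \<longrightarrow> v k = 0"
  shows "v \<in> cspan (unitv ` A)"
proof -
  let ?a = "\<lambda>u. v (inv unitv u)"
  have "(\<Sum>u\<in>unitv ` A. (\<lambda>k. ?a u * u k)) = (\<Sum>i\<in>A. (\<lambda>k. v i * unitv i k))"
    by (subst sum.reindex) (auto simp: inv_f_f[OF unitv_inj] intro: inj_on_subset[OF unitv_inj])
  also have "\<dots> = v"
  proof
    fix k
    have "(\<Sum>i\<in>A. (\<lambda>k. v i * unitv i k)) k = (\<Sum>i\<in>A. v i * unitv i k)" by (rule sum_fun_apply)
    also have "\<dots> = (if k \<in> A then v k else 0)"
      using assms(1) by (simp add: unitv_def sum.delta if_distrib[of "\<lambda>t. _ * t"] cong: if_cong)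
    also have "\<dots> = v k" using assms(2) by auto
    finally show "(\<Sum>i\<in>A. (\<lambda>k. v i * unitv i k)) k = v k" .
  qed
  finally have "v = (\<Sum>u\<in>unitv ` A. (\<lambda>k. ?a u * u k))" by simp
  then show ?thesis unfolding cspan_def
    by (intro CollectI exI[of _ "unitv ` A"] exI[of _ ?a]) (use assms(1) in auto)
qed

definition cset :: "nat \<Rightarrow> nat \<Rightarrow> (nat \<Rightarrow> complex) set" where
  "cset m n = {v \<in> vecs m. \<forall>k<n. v k = 0}"

lemma subsp_cset: "subsp (cset m n)"
  by (auto simp: subsp_def cset_def vecs_def)

lemma subsp_vecs: "subsp (vecs m)"
  by (auto simp: subsp_def vecs_def)

lemma adapted_lcs1: "adapted m n c \<Longrightarrow> lcs m c 1 = cset m n"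
proof -
  assume a: "adapted m n c"
  then have e: "lcs m c 1 = cspan (unitv ` {n..<m})" and nm: "n \<le> m" by (auto simp: adapted_def)
  have "cspan (unitv ` {n..<m}) \<subseteq> cset m n"
    by (rule cspan_sub[OF subsp_cset]) (auto simp: cset_def vecs_def unitv_def)
  moreover have "cset m n \<subseteq> cspan (unitv ` {n..<m})"
    by (auto simp: cset_def vecs_def intro!: cspan_unit)
  ultimately show ?thesis using e by auto
qed



declare lcs.simps(2)[simp del]

section \<open>Bracket algebra\<close>

lemma br_add1: "lie_br m c (x + y) z = lie_br m c x z + lie_br m c y z"
  unfolding lie_br_def plus_fun_def by (simp add: algebra_simps sum.distrib)
lemma br_add2: "lie_br m c z (x + y) = lie_br m c z x + lie_br m c z y"
  unfolding lie_br_def plus_fun_def by (simp add: algebra_simps sum.distrib)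
lemma br_smul1: "lie_br m c (\<lambda>k. a * x k) z = (\<lambda>k. a * lie_br m c x z k)"
  unfolding lie_br_def by (simp add: algebra_simps sum_distrib_left)
lemma br_smul2: "lie_br m c z (\<lambda>k. a * x k) = (\<lambda>k. a * lie_br m c z x k)"
  unfolding lie_br_def by (simp add: algebra_simps sum_distrib_left)
lemma br_zero1[simp]: "lie_br m c 0 z = 0"
  unfolding lie_br_def by (simp add: zero_fun_def)
lemma br_zero2[simp]: "lie_br m c z 0 = 0"
  unfolding lie_br_def by (simp add: zero_fun_def)

lemma br_antisym:
  assumes "\<forall>i j k. c i j k = - c j i k"
  shows "lie_br m c y x = - lie_br m c x y"
proof
  fix k
  have "lie_br m c y x k = (\<Sum>i<m. \<Sum>j<m. y i * x j * c i j k)" by (simp add: lie_br_def)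
  also have "\<dots> = (\<Sum>j<m. \<Sum>i<m. y i * x j * c i j k)" by (rule sum.swap)
  also have "\<dots> = (\<Sum>j<m. \<Sum>i<m. - (x j * y i * c j i k))"
  proof (rule sum.cong[OF refl], rule sum.cong[OF refl])
    fix j i
    have "c i j k = - c j i k" using assms by blast
    then show "y i * x j * c i j k = - (x j * y i * c j i k)" by simp
  qed
  also have "\<dots> = - lie_br m c x y k" by (simp add: lie_br_def sum_negf)
  finally show "lie_br m c y x k = (- lie_br m c x y) k" by simp
qed

lemma lie_zero: "is_lie_alg m c \<Longrightarrow> m \<le> i \<or> m \<le> j \<or> m \<le> k \<Longrightarrow> c i j k = 0"
  unfolding is_lie_alg_def by blast
lemma lie_anti: "is_lie_alg m c \<Longrightarrow> \<forall>i j k. c i j k = - c j i k"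
  unfolding is_lie_alg_def by blast
lemma lie_jacobi: "is_lie_alg m c \<Longrightarrow> x \<in> vecs m \<Longrightarrow> y \<in> vecs m \<Longrightarrow> z \<in> vecs m \<Longrightarrow>
   lie_br m c x (lie_br m c y z) + lie_br m c y (lie_br m c z x) + lie_br m c z (lie_br m c x y) = 0"
  unfolding is_lie_alg_def by blast

lemma br_vecs: "is_lie_alg m c \<Longrightarrow> lie_br m c x y \<in> vecs m"
  unfolding vecs_def lie_br_def by (simp add: lie_zero)

lemma br_lcs1: "x \<in> vecs m \<Longrightarrow> y \<in> vecs m \<Longrightarrow> lie_br m c x y \<in> lcs m c 1"
  unfolding One_nat_def lcs.simps by (rule cspan_mem) auto

section \<open>Derivations\<close>

lemma der_vec: "is_derivation m c D \<Longrightarrow> x \<in> vecs m \<Longrightarrow> D x \<in> vecs m"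
  by (simp add: is_derivation_def)
lemma der_lin: "is_derivation m c D \<Longrightarrow> x \<in> vecs m \<Longrightarrow> y \<in> vecs m \<Longrightarrow>
   D (\<lambda>k. a * x k + y k) = (\<lambda>k. a * D x k + D y k)"
  by (simp add: is_derivation_def)
lemma der_br: "is_derivation m c D \<Longrightarrow> x \<in> vecs m \<Longrightarrow> y \<in> vecs m \<Longrightarrow>
   D (lie_br m c x y) = lie_br m c (D x) y + lie_br m c x (D y)"
  by (simp add: is_derivation_def)
lemma der_add: "is_derivation m c D \<Longrightarrow> x \<in> vecs m \<Longrightarrow> y \<in> vecs m \<Longrightarrow> D (x + y) = D x + D y"
  using der_lin[of m c D x y 1] by (simp add: plus_fun_def)
lemma der_zero: "is_derivation m c D \<Longrightarrow> D 0 = 0"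
proof -
  assume d: "is_derivation m c D"
  have z: "(0::nat\<Rightarrow>complex) \<in> vecs m" by (simp add: vecs_def)
  have "D (0 + 0) = D 0 + D 0" by (rule der_add[OF d z z])
  then show ?thesis by simp
qed
lemma der_smul: "is_derivation m c D \<Longrightarrow> x \<in> vecs m \<Longrightarrow> D (\<lambda>k. a * x k) = (\<lambda>k. a * D x k)"
proof -
  assume d: "is_derivation m c D" and x: "x \<in> vecs m"
  have z: "(0::nat\<Rightarrow>complex) \<in> vecs m" by (simp add: vecs_def)
  have "D (\<lambda>k. a * x k + (0::nat\<Rightarrow>complex) k) = (\<lambda>k. a * D x k + D 0 k)" by (rule der_lin[OF d x z])
  then show ?thesis using der_zero[OF d] by simp
qed

lemma zero_der: "is_derivation m c (\<lambda>_. 0)"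
  by (simp add: is_derivation_def vecs_def zero_fun_def[symmetric])

lemma der_lcs1:
  assumes L: "is_lie_alg m c" and a: "adapted m n c" and d: "is_derivation m c D"
    and y: "y \<in> lcs m c 1"
  shows "D y \<in> lcs m c 1"
proof -
  let ?S = "{v \<in> vecs m. D v \<in> lcs m c 1}"
  have e: "lcs m c 1 = cset m n" by (rule adapted_lcs1[OF a])
  have "subsp ?S"
    unfolding subsp_def
  proof (intro conjI allI impI)
    have "D 0 = 0" by (rule der_zero[OF d])
    moreover have "0 \<in> cset m n" "0 \<in> vecs m" by (auto simp: cset_def vecs_def)
    ultimately show "0 \<in> ?S" using e by simp
  next
    fix a x y assume "x \<in> ?S" "y \<in> ?S"
    then show "(\<lambda>k. a * x k + y k) \<in> ?S"
      using der_lin[OF d] subspD[OF subsp_vecs] subspD[OF subsp_cset] e by auto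
  qed
  moreover have "{lie_br m c x y | x y. x \<in> vecs m \<and> y \<in> lcs m c 0} \<subseteq> ?S"
  proof safe
    fix x y assume x: "x \<in> vecs m" and y: "y \<in> lcs m c 0"
    then have y': "y \<in> vecs m" by simp
    show "lie_br m c x y \<in> vecs m" by (rule br_vecs[OF L])
    have "D (lie_br m c x y) = lie_br m c (D x) y + lie_br m c x (D y)" by (rule der_br[OF d x y'])
    moreover have "lie_br m c (D x) y \<in> lcs m c 1" by (rule br_lcs1[OF der_vec[OF d x] y'])
    moreover have "lie_br m c x (D y) \<in> lcs m c 1" by (rule br_lcs1[OF x der_vec[OF d y']])
    ultimately show "D (lie_br m c x y) \<in> lcs m c 1" using subsp_add[OF subsp_cset] e by metis
  qed
  ultimately have "cspan {lie_br m c x y | x y. x \<in> vecs m \<and> y \<in> lcs m c 0} \<subseteq> ?S"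
    by (rule cspan_sub)
  then show ?thesis using y unfolding One_nat_def lcs.simps by auto
qed

lemma adapted_lcs1': "adapted m n c \<Longrightarrow> lcs m c (Suc 0) = cset m n"
  using adapted_lcs1 by simp

lemma lcs1_vecs: "adapted m n c \<Longrightarrow> y \<in> lcs m c 1 \<Longrightarrow> y \<in> vecs m"
  by (simp add: adapted_lcs1' cset_def)

section \<open>Killing levels\<close>

fun app :: "((nat\<Rightarrow>complex)\<Rightarrow>(nat\<Rightarrow>complex)) list \<Rightarrow> (nat\<Rightarrow>complex) \<Rightarrow> (nat\<Rightarrow>complex)" where
  "app [] v = v"
| "app (d # ds) v = app ds (d v)"

definition klev :: "nat \<Rightarrow> (nat \<Rightarrow> nat \<Rightarrow> nat \<Rightarrow> complex) \<Rightarrow> nat \<Rightarrow> (nat \<Rightarrow> complex) set" where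
  "klev m c a = {y \<in> vecs m. \<forall>ds. (\<forall>d\<in>set ds. is_derivation m c d) \<longrightarrow> length ds = a \<longrightarrow> app ds y = 0}"

lemma app_append: "app (xs @ ys) v = app ys (app xs v)"
  by (induction xs arbitrary: v) auto

lemma app_zero: "(\<forall>d\<in>set ds. is_derivation m c d) \<Longrightarrow> app ds 0 = 0"
proof (induction ds)
  case Nil then show ?case by simp
next
  case (Cons d ds)
  have "d 0 = 0" using Cons.prems der_zero by auto
  have "app (d # ds) 0 = app ds (d 0)" by (rule app.simps(2))
  also have "\<dots> = app ds 0" using \<open>d 0 = 0\<close> by (rule arg_cong)
  also have "\<dots> = 0" using Cons.prems by (intro Cons.IH) auto
  finally show ?case .
qed

lemma app_props: "(\<forall>d\<in>set ds. is_derivation m c d) \<Longrightarrow> x \<in> vecs m \<Longrightarrow> y \<in> vecs m \<Longrightarrow>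
   app ds x \<in> vecs m \<and> app ds (\<lambda>k. a * x k + y k) = (\<lambda>k. a * app ds x k + app ds y k)"
proof (induction ds arbitrary: x y)
  case Nil then show ?case by simp
next
  case (Cons d ds)
  then have d: "is_derivation m c d" by simp
  have "app (d # ds) (\<lambda>k. a * x k + y k) = app ds (\<lambda>k. a * d x k + d y k)"
    using der_lin[OF d Cons.prems(2,3)] by simp
  also have "\<dots> = (\<lambda>k. a * app ds (d x) k + app ds (d y) k)"
    using Cons.IH[of "d x" "d y"] Cons.prems der_vec[OF d] by simp
  finally show ?case using Cons.IH[of "d x" "d y"] Cons.prems der_vec[OF d] by simp
qed

lemma klev_vecs: "y \<in> klev m c a \<Longrightarrow> y \<in> vecs m"
  by (simp add: klev_def)

lemma klev_0: "y \<in> klev m c 0 \<Longrightarrow> y = 0"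
  unfolding klev_def by (auto dest: spec[of _ "[]"])

lemma subsp_klev: "subsp (klev m c a)"
  unfolding subsp_def
proof (intro conjI allI impI)
  show "0 \<in> klev m c a" by (auto simp: klev_def vecs_def app_zero)
next
  fix s x y assume x: "x \<in> klev m c a" and y: "y \<in> klev m c a"
  show "(\<lambda>k. s * x k + y k) \<in> klev m c a"
    unfolding klev_def
  proof (intro CollectI conjI allI impI)
    show "(\<lambda>k. s * x k + y k) \<in> vecs m" using x y by (auto simp: klev_def vecs_def)
  next
    fix ds assume "\<forall>d\<in>set ds. is_derivation m c d" "length ds = a"
    then show "app ds (\<lambda>k. s * x k + y k) = 0"
      using app_props[of ds m c x y s] x y by (auto simp: klev_def zero_fun_def)
  qed
qed

lemma klev_step: "is_derivation m c D \<Longrightarrow> y \<in> klev m c (Suc a) \<Longrightarrow> D y \<in> klev m c a"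
proof -
  assume d: "is_derivation m c D" and y: "y \<in> klev m c (Suc a)"
  have "D y \<in> vecs m" using der_vec[OF d] klev_vecs[OF y] .
  moreover have "app ds (D y) = 0" if "\<forall>d\<in>set ds. is_derivation m c d" "length ds = a" for ds
  proof -
    have "\<forall>d\<in>set (D # ds). is_derivation m c d" "length (D # ds) = Suc a" using that d by auto
    then have "app (D # ds) y = 0" using y unfolding klev_def by blast
    then show ?thesis by simp
  qed
  ultimately show ?thesis unfolding klev_def by blast
qed

lemma klev_intro: "y \<in> vecs m \<Longrightarrow> (\<And>D. is_derivation m c D \<Longrightarrow> D y \<in> klev m c a) \<Longrightarrow> y \<in> klev m c (Suc a)"
proof -
  assume y: "y \<in> vecs m" and h: "\<And>D. is_derivation m c D \<Longrightarrow> D y \<in> klev m c a"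
  have "app ds y = 0" if ds: "\<forall>d\<in>set ds. is_derivation m c d" "length ds = Suc a" for ds
  proof -
    obtain d ds' where e: "ds = d # ds'" using ds by (cases ds) auto
    then have "d y \<in> klev m c a" using h ds by auto
    moreover have "\<forall>d\<in>set ds'. is_derivation m c d" "length ds' = a" using ds e by auto
    ultimately have "app ds' (d y) = 0" unfolding klev_def by blast
    then show ?thesis using e by simp
  qed
  then show ?thesis using y unfolding klev_def by blast
qed

lemma klev_mono: "a \<le> b \<Longrightarrow> y \<in> klev m c a \<Longrightarrow> y \<in> klev m c b"
proof -
  assume ab: "a \<le> b" and y: "y \<in> klev m c a"
  have "app ds y = 0" if ds: "\<forall>d\<in>set ds. is_derivation m c d" "length ds = b" for ds
  proof -
    have "ds = take a ds @ drop a ds" by simp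
    then have "app ds y = app (drop a ds) (app (take a ds) y)" by (metis app_append)
    moreover have "app (take a ds) y = 0"
    proof -
      have "\<forall>d\<in>set (take a ds). is_derivation m c d" "length (take a ds) = a" using ds ab by (auto dest: in_set_takeD)
      then show ?thesis using y unfolding klev_def by blast
    qed
    moreover have "app (drop a ds) 0 = 0" using ds by (intro app_zero) (auto dest: in_set_dropD)
    ultimately show ?thesis by simp
  qed
  then show ?thesis using klev_vecs[OF y] unfolding klev_def by blast
qed

lemma der_series_app: "y \<in> der_series m c j \<Longrightarrow> (\<forall>d\<in>set ds. is_derivation m c d) \<Longrightarrow>
   app ds y \<in> der_series m c (j + length ds)"
proof (induction ds arbitrary: y j)
  case Nil then show ?case by simp
next
  case (Cons d ds)
  have "d y \<in> der_series m c (Suc j)" using Cons.prems by auto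
  then show ?case using Cons.IH[of "d y" "Suc j"] Cons.prems by simp
qed

lemma klev_top: "der_series m c k = {0} \<Longrightarrow> vecs m \<subseteq> klev m c k"
  unfolding klev_def using der_series_app[of _ m c 0] by auto

lemma der_series_klev: "vecs m \<subseteq> klev m c N \<Longrightarrow> j \<le> N \<Longrightarrow> der_series m c j \<subseteq> klev m c (N - j)"
proof (induction j)
  case 0 then show ?case by simp
next
  case (Suc j)
  show ?case
  proof
    fix y assume "y \<in> der_series m c (Suc j)"
    then obtain D y' where "y = D y'" "is_derivation m c D" "y' \<in> der_series m c j" by auto
    moreover have "N - j = Suc (N - Suc j)" using Suc.prems by simp
    ultimately show "y \<in> klev m c (N - Suc j)" using Suc klev_step by fastforce
  qed
qed

lemma zero_der_series: "0 \<in> der_series m c j"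
proof (induction j)
  case 0 then show ?case by (simp add: vecs_def)
next
  case (Suc j)
  show ?case unfolding der_series.simps
    by (rule CollectI, intro exI[of _ "\<lambda>_. 0"] exI[of _ 0] conjI) (use zero_der[of m c] Suc in auto)
qed

lemma der_series_final: "vecs m \<subseteq> klev m c N \<Longrightarrow> der_series m c N = {0}"
  using der_series_klev[of m c N N] zero_der_series[of m c N] klev_0 by auto



lemma sum_shift: "(\<Sum>i\<in>{a..<a+b}. g i) = (\<Sum>i<b. g (a+i))" for g :: "nat \<Rightarrow> 'a::comm_monoid_add"
  by (induction b) (auto simp: add.commute)

lemma delta_mult: "(\<Sum>j<(m::nat). (if j = a then 1 else 0) * f j) = (if a < m then f a else (0::complex))"
proof -
  have "(\<Sum>j<m. (if j = a then 1 else 0) * f j) = (\<Sum>j<m. if j = a then f j else 0)"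
    by (rule sum.cong) auto
  then show ?thesis by (simp add: sum.delta)
qed

lemma delta_mult2: "(\<Sum>j<(m::nat). f j * (if j = a then 1 else 0)) = (if a < m then f a else (0::complex))"
  using delta_mult[where m=m and a=a and f=f] by (simp add: mult.commute)

lemma dsum_restrict:
  fixes f :: "nat \<Rightarrow> nat \<Rightarrow> complex"
  assumes z: "\<And>i j. i < M \<Longrightarrow> j < M \<Longrightarrow> \<not> (a \<le> i \<and> i < a+b \<and> a \<le> j \<and> j < a+b) \<Longrightarrow> f i j = 0"
    and ab: "a + b \<le> M"
  shows "(\<Sum>i<M. \<Sum>j<M. f i j) = (\<Sum>i<b. \<Sum>j<b. f (a+i) (a+j))"
proof -
  have "(\<Sum>i<M. \<Sum>j<M. f i j) = (\<Sum>i\<in>{a..<a+b}. \<Sum>j<M. f i j)"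
  proof (rule sum.mono_neutral_right)
    show "\<forall>i\<in>{..<M} - {a..<a+b}. (\<Sum>j<M. f i j) = 0"
    proof
      fix i assume "i \<in> {..<M} - {a..<a+b}"
      then have "f i j = 0" if "j < M" for j using z that by auto
      then show "(\<Sum>j<M. f i j) = 0" by simp
    qed
  qed (use ab in auto)
  also have "\<dots> = (\<Sum>i\<in>{a..<a+b}. \<Sum>j\<in>{a..<a+b}. f i j)"
  proof (rule sum.cong[OF refl], rule sum.mono_neutral_right)
    fix i assume i: "i \<in> {a..<a+b}"
    show "\<forall>j\<in>{..<M} - {a..<a+b}. f i j = 0"
    proof
      fix j assume "j \<in> {..<M} - {a..<a+b}"
      then show "f i j = 0" using z[of i j] i ab by auto
    qed
  qed (use ab in auto)
  also have "\<dots> = (\<Sum>i<b. \<Sum>j<b. f (a+i) (a+j))"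
    by (simp add: sum_shift)
  finally show ?thesis .
qed

lemma br_unit: "lie_br m c (unitv i) (unitv j) k = (if i < m \<and> j < m then c i j k else 0)"
proof -
  have "lie_br m c (unitv i) (unitv j) k = (\<Sum>i'<m. \<Sum>j'<m. (if i' = i then 1 else 0) * (if j' = j then 1 else 0) * c i' j' k)"
    by (simp add: lie_br_def unitv_def)
  also have "\<dots> = (\<Sum>i'<m. (if i' = i then 1 else 0) * (\<Sum>j'<m. (if j' = j then 1 else 0) * c i' j' k))"
    by (simp add: sum_distrib_left mult.assoc)
  also have "\<dots> = (if i < m \<and> j < m then c i j k else 0)"
    by (simp add: delta_mult)
  finally show ?thesis .
qed

lemma gen_zero:
  assumes L: "is_lie_alg m c" and a: "adapted m n c" and k: "k < n"
  shows "c i j k = 0"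
proof (cases "i < m \<and> j < m")
  case True
  then have "unitv i \<in> vecs m" "unitv j \<in> vecs m" by (auto simp: vecs_def unitv_def)
  then have "lie_br m c (unitv i) (unitv j) \<in> cset m n" using br_lcs1 adapted_lcs1[OF a] by metis
  then have "lie_br m c (unitv i) (unitv j) k = 0" using k by (simp add: cset_def)
  then show ?thesis using True by (simp add: br_unit)
next
  case False then show ?thesis using lie_zero[OF L] by auto
qed

locale PG =
  fixes m1 n1 :: nat and c1 :: "nat \<Rightarrow> nat \<Rightarrow> nat \<Rightarrow> complex"
    and m2 n2 :: nat and c2 :: "nat \<Rightarrow> nat \<Rightarrow> nat \<Rightarrow> complex"
  assumes L1: "is_lie_alg m1 c1" and A1: "adapted m1 n1 c1"
    and L2: "is_lie_alg m2 c2" and A2: "adapted m2 n2 c2"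
begin

abbreviation "MM \<equiv> prod_dim m1 n1 m2 n2"
abbreviation "cc \<equiv> prod_gen m1 n1 c1 m2 n2 c2"
abbreviation "p2 \<equiv> proj2 m1 m2"

definition P1 :: "(nat \<Rightarrow> complex) \<Rightarrow> (nat \<Rightarrow> complex)" where
  "P1 v = (\<lambda>k. if k < m1 then v k else 0)"
definition U :: "(nat \<Rightarrow> complex) \<Rightarrow> (nat \<Rightarrow> complex)" where
  "U w = (\<lambda>k. if m1 \<le> k \<and> k < m1 + m2 then w (k - m1) else 0)"
definition P3 :: "(nat \<Rightarrow> complex) \<Rightarrow> (nat \<Rightarrow> complex)" where
  "P3 v = (\<lambda>k. if m1 + m2 \<le> k then v k else 0)"

lemma n1m1: "n1 \<le> m1" using A1 by (simp add: adapted_def)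
lemma n2m2: "n2 \<le> m2" using A2 by (simp add: adapted_def)

lemma MM_eq: "MM = m1 + m2 + n1 * n2" by (simp add: prod_dim_def)

lemma c1_gen: "k < n1 \<Longrightarrow> c1 i j k = 0" by (rule gen_zero[OF L1 A1])
lemma c2_gen: "k < n2 \<Longrightarrow> c2 i j k = 0" by (rule gen_zero[OF L2 A2])

lemma cc_P1: "k < m1 \<Longrightarrow> cc i j k = (if i < m1 \<and> j < m1 then c1 i j k else 0)"
  by (auto simp: prod_gen_def)

lemma cc_P2: "k < m2 \<Longrightarrow> cc i j (m1 + k) =
   (if m1 \<le> i \<and> i < m1 + m2 \<and> m1 \<le> j \<and> j < m1 + m2 then c2 (i - m1) (j - m1) k else 0)"
  by (auto simp: prod_gen_def)

lemma cc_P3: "m1 + m2 \<le> k \<Longrightarrow> cc i j k \<noteq> 0 \<Longrightarrow>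
   (i < n1 \<and> m1 \<le> j \<and> j < m1 + n2) \<or> (j < n1 \<and> m1 \<le> i \<and> i < m1 + n2)"
  by (auto simp: prod_gen_def split: if_splits)

lemma cc_hi1: "m1 + m2 \<le> i \<Longrightarrow> cc i j k = 0"
  using n1m1 n2m2 by (auto simp: prod_gen_def)
lemma cc_hi2: "m1 + m2 \<le> j \<Longrightarrow> cc i j k = 0"
  using n1m1 n2m2 by (auto simp: prod_gen_def)

lemma cc_C2a: "m1 + n2 \<le> i \<Longrightarrow> j < m1 \<Longrightarrow> cc i j k = 0"
  using n1m1 n2m2 by (auto simp: prod_gen_def)
lemma cc_C2b: "m1 + n2 \<le> j \<Longrightarrow> i < m1 \<Longrightarrow> cc i j k = 0"
  using n1m1 n2m2 by (auto simp: prod_gen_def)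

lemma mult_bound: "i < n1 \<Longrightarrow> j < n2 \<Longrightarrow> i * n2 + j < n1 * n2"
proof -
  assume "i < n1" "j < n2"
  then have "i * n2 + j < (i + 1) * n2" by simp
  also have "\<dots> \<le> n1 * n2" using \<open>i < n1\<close> by (intro mult_right_mono) auto
  finally show ?thesis .
qed

lemma cc_vanish: "MM \<le> i \<or> MM \<le> j \<or> MM \<le> k \<Longrightarrow> cc i j k = 0"
proof -
  assume h: "MM \<le> i \<or> MM \<le> j \<or> MM \<le> k"
  have z1: "c1 i j k = 0" if "m1 \<le> i \<or> m1 \<le> j \<or> m1 \<le> k" for i j k using lie_zero[OF L1] that by blast
  have z2: "c2 i j k = 0" if "m2 \<le> i \<or> m2 \<le> j \<or> m2 \<le> k" for i j k using lie_zero[OF L2] that by blast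
  have b1: "k \<noteq> m1 + m2 + i * n2 + (j - m1)" if "i < n1" "m1 \<le> j" "j < m1 + n2" "MM \<le> k"
  proof -
    have "i * n2 + (j - m1) < n1 * n2" by (rule mult_bound) (use that in auto)
    then show ?thesis using that(4) unfolding MM_eq by linarith
  qed
  have b2: "k \<noteq> m1 + m2 + j * n2 + (i - m1)" if "j < n1" "m1 \<le> i" "i < m1 + n2" "MM \<le> k"
  proof -
    have "j * n2 + (i - m1) < n1 * n2" by (rule mult_bound) (use that in auto)
    then show ?thesis using that(4) unfolding MM_eq by linarith
  qed
  show ?thesis using h n1m1 n2m2 b1 b2 unfolding prod_gen_def MM_eq
    by (auto simp: z1 z2)
qed

lemma cc_anti: "cc i j k = - cc j i k"
proof -
  have a1: "c1 i j k = - c1 j i k" using lie_anti[OF L1] by blast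
  have a2: "c2 (i - m1) (j - m1) (k - m1) = - c2 (j - m1) (i - m1) (k - m1)" using lie_anti[OF L2] by blast
  show ?thesis using a1 a2 n1m1 unfolding prod_gen_def by auto
qed

end


context PG begin

lemma vecs_m1_MM: "x \<in> vecs m1 \<Longrightarrow> x \<in> vecs MM"
  by (auto simp: vecs_def MM_eq)

lemma U_vecs: "U w \<in> vecs MM"
  by (auto simp: vecs_def MM_eq U_def)
lemma P1_vecs: "P1 v \<in> vecs m1"
  by (auto simp: vecs_def P1_def)
lemma P1_vecsM: "P1 v \<in> vecs MM"
  by (auto simp: vecs_def P1_def MM_eq)
lemma p2_vecs: "p2 v \<in> vecs m2"
  by (auto simp: vecs_def proj2_def)
lemma P3_vecs: "v \<in> vecs MM \<Longrightarrow> P3 v \<in> vecs MM"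
  by (auto simp: vecs_def P3_def)
lemma P3_low: "k < m1 + m2 \<Longrightarrow> P3 v k = 0"
  by (simp add: P3_def)

lemma P1_id: "x \<in> vecs m1 \<Longrightarrow> P1 x = x"
  by (auto simp: vecs_def P1_def)
lemma p2_U: "w \<in> vecs m2 \<Longrightarrow> p2 (U w) = w"
  by (auto simp: vecs_def proj2_def U_def)
lemma P1_U[simp]: "P1 (U w) = 0"
  by (auto simp: P1_def U_def)
lemma P3_U[simp]: "P3 (U w) = 0"
  by (auto simp: P3_def U_def)
lemma p2_m1: "x \<in> vecs m1 \<Longrightarrow> p2 x = 0"
  by (auto simp: vecs_def proj2_def)
lemma P3_m1: "x \<in> vecs m1 \<Longrightarrow> P3 x = 0"
  by (auto simp: vecs_def P3_def)
lemma U_zero[simp]: "U 0 = 0"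
  by (auto simp: U_def)
lemma P1_zero[simp]: "P1 0 = 0" by (auto simp: P1_def)
lemma p2_zero[simp]: "p2 0 = 0" by (auto simp: proj2_def)
lemma P3_zero[simp]: "P3 0 = 0" by (auto simp: P3_def)

lemma P1_add: "P1 (v + w) = P1 v + P1 w" by (auto simp: P1_def)
lemma p2_add: "p2 (v + w) = p2 v + p2 w" by (auto simp: proj2_def)
lemma P3_add: "P3 (v + w) = P3 v + P3 w" by (auto simp: P3_def)
lemma U_add: "U (v + w) = U v + U w" by (auto simp: U_def)
lemma P1_lin: "P1 (\<lambda>k. a * v k + w k) = (\<lambda>k. a * P1 v k + P1 w k)" by (auto simp: P1_def)
lemma p2_lin: "p2 (\<lambda>k. a * v k + w k) = (\<lambda>k. a * p2 v k + p2 w k)" by (auto simp: proj2_def)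
lemma U_lin: "U (\<lambda>k. a * v k + w k) = (\<lambda>k. a * U v k + U w k)" by (auto simp: U_def)

lemma decomp: "v \<in> vecs MM \<Longrightarrow> v = P1 v + U (p2 v) + P3 v"
  by (auto simp: vecs_def P1_def U_def P3_def proj2_def MM_eq)

lemma br_MM_vecs: "lie_br MM cc x y \<in> vecs MM"
  unfolding vecs_def lie_br_def by (simp add: cc_vanish)

lemma P1_br: "P1 (lie_br MM cc v w) = lie_br m1 c1 (P1 v) (P1 w)"
proof
  fix k
  show "P1 (lie_br MM cc v w) k = lie_br m1 c1 (P1 v) (P1 w) k"
  proof (cases "k < m1")
    case True
    have "P1 (lie_br MM cc v w) k = (\<Sum>i<MM. \<Sum>j<MM. v i * w j * cc i j k)"
      using True by (simp add: P1_def lie_br_def)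
    also have "\<dots> = (\<Sum>i<m1. \<Sum>j<m1. v (0+i) * w (0+j) * cc (0+i) (0+j) k)"
      by (rule dsum_restrict) (use True cc_P1 in \<open>auto simp: MM_eq\<close>)
    also have "\<dots> = lie_br m1 c1 (P1 v) (P1 w) k"
      using True by (simp add: lie_br_def P1_def cc_P1)
    finally show ?thesis .
  next
    case False
    then show ?thesis using lie_zero[OF L1] by (simp add: P1_def lie_br_def)
  qed
qed

lemma p2_br: "p2 (lie_br MM cc v w) = lie_br m2 c2 (p2 v) (p2 w)"
proof
  fix k
  show "p2 (lie_br MM cc v w) k = lie_br m2 c2 (p2 v) (p2 w) k"
  proof (cases "k < m2")
    case True
    have "p2 (lie_br MM cc v w) k = (\<Sum>i<MM. \<Sum>j<MM. v i * w j * cc i j (m1 + k))"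
      using True by (simp add: proj2_def lie_br_def)
    also have "\<dots> = (\<Sum>i<m2. \<Sum>j<m2. v (m1+i) * w (m1+j) * cc (m1+i) (m1+j) (m1 + k))"
      by (rule dsum_restrict) (use True cc_P2 in \<open>auto simp: MM_eq\<close>)
    also have "\<dots> = lie_br m2 c2 (p2 v) (p2 w) k"
      using True by (simp add: lie_br_def proj2_def cc_P2)
    finally show ?thesis .
  next
    case False
    then show ?thesis using lie_zero[OF L2] by (simp add: proj2_def lie_br_def)
  qed
qed

lemma P3_br_gen:
  assumes "\<And>i j. v i \<noteq> 0 \<Longrightarrow> w j \<noteq> 0 \<Longrightarrow>
     \<not> ((i < n1 \<and> m1 \<le> j \<and> j < m1 + n2) \<or> (j < n1 \<and> m1 \<le> i \<and> i < m1 + n2))"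
  shows "P3 (lie_br MM cc v w) = 0"
proof
  fix k
  show "P3 (lie_br MM cc v w) k = 0 k"
  proof (cases "m1 + m2 \<le> k")
    case True
    have t: "v i * w j * cc i j k = 0" for i j
      using assms[of i j] cc_P3[OF True, of i j] by auto
    show ?thesis by (simp add: P3_def lie_br_def t)
  qed (simp add: P3_def)
qed

lemma br_zero_gen:
  assumes "\<And>i j k. v i \<noteq> 0 \<Longrightarrow> w j \<noteq> 0 \<Longrightarrow> cc i j k = 0"
  shows "lie_br MM cc v w = 0"
proof
  fix k
  have t: "v i * w j * cc i j k = 0" for i j using assms[of i j k] by auto
  show "lie_br MM cc v w k = 0 k" by (simp add: lie_br_def t)
qed

lemma br_hi1: "(\<And>k. k < m1 + m2 \<Longrightarrow> z k = 0) \<Longrightarrow> lie_br MM cc z w = 0"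
  by (rule br_zero_gen) (metis cc_hi1 not_le)
lemma br_hi2: "(\<And>k. k < m1 + m2 \<Longrightarrow> z k = 0) \<Longrightarrow> lie_br MM cc w z = 0"
  by (rule br_zero_gen) (metis cc_hi2 not_le)

lemma br_P3_1[simp]: "lie_br MM cc (P3 v) w = 0"
  by (rule br_hi1) (simp add: P3_def)
lemma br_P3_2[simp]: "lie_br MM cc w (P3 v) = 0"
  by (rule br_hi2) (simp add: P3_def)

lemma U_C2: "u \<in> cset m2 n2 \<Longrightarrow> U u i \<noteq> 0 \<Longrightarrow> m1 + n2 \<le> i"
proof -
  assume u: "u \<in> cset m2 n2" and h: "U u i \<noteq> 0"
  have i1: "m1 \<le> i" and i2: "u (i - m1) \<noteq> 0" using h by (auto simp: U_def split: if_splits)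
  have "\<not> (i - m1 < n2)" using i2 u by (auto simp: cset_def)
  then show ?thesis using i1 by linarith
qed

lemma m1_nz: "x \<in> vecs m1 \<Longrightarrow> x j \<noteq> 0 \<Longrightarrow> j < m1"
  by (metis not_le vecs_iff)

lemma br_C2_1: "u \<in> cset m2 n2 \<Longrightarrow> x \<in> vecs m1 \<Longrightarrow> lie_br MM cc (U u) x = 0"
  by (rule br_zero_gen, rule cc_C2a) (auto dest: U_C2 m1_nz)
lemma br_C2_2: "u \<in> cset m2 n2 \<Longrightarrow> x \<in> vecs m1 \<Longrightarrow> lie_br MM cc x (U u) = 0"
  by (rule br_zero_gen, rule cc_C2b) (auto dest: U_C2 m1_nz)

lemma E1: "x \<in> vecs m1 \<Longrightarrow> y \<in> vecs m1 \<Longrightarrow> lie_br MM cc x y = lie_br m1 c1 x y"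
proof -
  assume x: "x \<in> vecs m1" and y: "y \<in> vecs m1"
  have "P3 (lie_br MM cc x y) = 0"
    by (rule P3_br_gen) (use x y in \<open>auto simp: vecs_def\<close>)
  then show ?thesis
    using decomp[OF br_MM_vecs, of x y] P1_br[of x y] p2_br[of x y] P1_id[OF x] P1_id[OF y] p2_m1[OF x] p2_m1[OF y]
    by simp
qed

lemma E2: "w1 \<in> vecs m2 \<Longrightarrow> w2 \<in> vecs m2 \<Longrightarrow> lie_br MM cc (U w1) (U w2) = U (lie_br m2 c2 w1 w2)"
proof -
  assume x: "w1 \<in> vecs m2" and y: "w2 \<in> vecs m2"
  have "P3 (lie_br MM cc (U w1) (U w2)) = 0"
    by (rule P3_br_gen) (use n1m1 in \<open>auto simp: U_def split: if_splits\<close>)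
  then show ?thesis
    using decomp[OF br_MM_vecs, of "U w1" "U w2"] P1_br[of "U w1" "U w2"] p2_br[of "U w1" "U w2"] p2_U[OF x] p2_U[OF y]
    by simp
qed

lemma br_gen0: "k < n1 \<or> (m1 \<le> k \<and> k < m1 + n2) \<Longrightarrow> lie_br MM cc y z k = 0"
proof -
  assume h: "k < n1 \<or> (m1 \<le> k \<and> k < m1 + n2)"
  have "cc i j k = 0" for i j
  proof (cases "k < n1")
    case True then show ?thesis using n1m1 cc_P1[of k i j] c1_gen by simp
  next
    case False
    then obtain k' where k: "k = m1 + k'" "k' < n2" using h by (metis le_add_diff_inverse nat_add_left_cancel_less)
    then show ?thesis using n2m2 cc_P2[of k' i j] c2_gen by simp
  qed
  then show ?thesis by (simp add: lie_br_def)
qed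

lemma P3_br_br: "P3 (lie_br MM cc x (lie_br MM cc y z)) = 0"
  by (rule P3_br_gen) (use br_gen0 in blast)

lemma prod_lie: "is_lie_alg MM cc"
  unfolding is_lie_alg_def
proof (intro conjI allI impI ballI)
  show "cc i j k = 0" if "MM \<le> i \<or> MM \<le> j \<or> MM \<le> k" for i j k using cc_vanish that by blast
  show "cc i j k = - cc j i k" for i j k by (rule cc_anti)
  fix x y z assume x: "x \<in> vecs MM" and y: "y \<in> vecs MM" and z: "z \<in> vecs MM"
  let ?J = "lie_br MM cc x (lie_br MM cc y z) + lie_br MM cc y (lie_br MM cc z x) + lie_br MM cc z (lie_br MM cc x y)"
  have J: "?J \<in> vecs MM" using br_MM_vecs subsp_add[OF subsp_vecs] by metis
  have "P1 ?J = lie_br m1 c1 (P1 x) (lie_br m1 c1 (P1 y) (P1 z)) + lie_br m1 c1 (P1 y) (lie_br m1 c1 (P1 z) (P1 x))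
     + lie_br m1 c1 (P1 z) (lie_br m1 c1 (P1 x) (P1 y))"
    by (simp add: P1_add P1_br)
  also have "\<dots> = 0" by (rule lie_jacobi[OF L1 P1_vecs P1_vecs P1_vecs])
  finally have 1: "P1 ?J = 0" .
  have "p2 ?J = lie_br m2 c2 (p2 x) (lie_br m2 c2 (p2 y) (p2 z)) + lie_br m2 c2 (p2 y) (lie_br m2 c2 (p2 z) (p2 x))
     + lie_br m2 c2 (p2 z) (lie_br m2 c2 (p2 x) (p2 y))"
    by (simp add: p2_add p2_br)
  also have "\<dots> = 0" by (rule lie_jacobi[OF L2 p2_vecs p2_vecs p2_vecs])
  finally have 2: "p2 ?J = 0" .
  have 3: "P3 ?J = 0" by (simp add: P3_add P3_br_br)
  show "?J = 0" using decomp[OF J] 1 2 3 by simp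
qed

end


lemma subsp_cspan: "subsp (cspan G)"
  unfolding subsp_def
proof (intro conjI allI impI)
  show "0 \<in> cspan G" by (rule cspan_zero)
next
  fix s x y assume "x \<in> cspan G" "y \<in> cspan G"
  then obtain F a H b where x: "x = (\<Sum>u\<in>F. (\<lambda>k. a u * u k))" and F: "finite F" "F \<subseteq> G"
    and y: "y = (\<Sum>u\<in>H. (\<lambda>k. b u * u k))" and H: "finite H" "H \<subseteq> G"
    unfolding cspan_def by blast
  let ?e = "\<lambda>u. s * (if u \<in> F then a u else 0) + (if u \<in> H then b u else 0)"
  have "(\<Sum>u\<in>F \<union> H. (\<lambda>k. ?e u * u k)) = (\<lambda>k. s * x k + y k)"
  proof
    fix k
    have fin: "finite (F \<union> H)" using F H by simp
    have "(\<Sum>u\<in>F \<union> H. (\<lambda>k. ?e u * u k)) k = (\<Sum>u\<in>F \<union> H. ?e u * u k)" by (rule sum_fun_apply)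
    also have "\<dots> = (\<Sum>u\<in>F \<union> H. s * (if u \<in> F then a u * u k else 0) + (if u \<in> H then b u * u k else 0))"
      by (rule sum.cong) (auto simp: algebra_simps)
    also have "\<dots> = s * (\<Sum>u\<in>F \<union> H. if u \<in> F then a u * u k else 0) + (\<Sum>u\<in>F \<union> H. if u \<in> H then b u * u k else 0)"
      by (simp only: sum.distrib sum_distrib_left)
    also have "(\<Sum>u\<in>F \<union> H. if u \<in> F then a u * u k else 0) = (\<Sum>u\<in>F. a u * u k)"
      using sum.inter_restrict[OF fin, of "\<lambda>u. a u * u k" F] by (simp add: Int_absorb1)
    also have "(\<Sum>u\<in>F \<union> H. if u \<in> H then b u * u k else 0) = (\<Sum>u\<in>H. b u * u k)"
      using sum.inter_restrict[OF fin, of "\<lambda>u. b u * u k" H] by (simp add: Int_absorb1)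
    finally show "(\<Sum>u\<in>F \<union> H. (\<lambda>k. ?e u * u k)) k = s * x k + y k"
      using x y by (simp add: sum_fun_apply)
  qed
  then show "(\<lambda>k. s * x k + y k) \<in> cspan G" unfolding cspan_def using F H
    by (intro CollectI exI[of _ "F \<union> H"] exI[of _ ?e]) auto
qed

lemma subsp_lcs: "subsp (lcs m c k)"
  by (cases k) (simp_all add: subsp_vecs lcs.simps subsp_cspan)

lemma lcs_zero_persist: "lcs m c k = {0} \<Longrightarrow> lcs m c (k + j) = {0}"
proof (induction j)
  case 0 then show ?case by simp
next
  case (Suc j)
  have h: "lie_br m c x y \<in> {0}" if "y \<in> lcs m c (k + j)" for x y
  proof -
    have "y = 0" using that Suc by blast
    then show ?thesis using br_zero2[of m c x] by simp
  qed
  have "subsp {0::nat\<Rightarrow>complex}" unfolding subsp_def by (simp add: zero_fun_def)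
  then have "cspan {lie_br m c x y | x y. x \<in> vecs m \<and> y \<in> lcs m c (k + j)} \<subseteq> {0}"
    by (rule cspan_sub) (use h in blast)
  moreover have "lcs m c (k + Suc j) = cspan {lie_br m c x y | x y. x \<in> vecs m \<and> y \<in> lcs m c (k + j)}"
    by (simp add: lcs.simps)
  ultimately show ?case using cspan_zero by blast
qed

context PG begin

definition T :: "nat \<Rightarrow> (nat \<Rightarrow> complex) set" where
  "T k = {v \<in> vecs MM. P1 v \<in> lcs m1 c1 k \<and> p2 v \<in> lcs m2 c2 k
     \<and> (\<forall>j. j < n1 \<or> (m1 \<le> j \<and> j < m1 + n2) \<longrightarrow> v j = 0) \<and> (2 \<le> k \<longrightarrow> (\<forall>j. m1 + m2 \<le> j \<longrightarrow> v j = 0))}"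

lemma subsp_T: "subsp (T k)"
  unfolding subsp_def
proof (intro conjI allI impI)
  show "0 \<in> T k" using subsp_lcs unfolding T_def subsp_def by (auto simp: vecs_def)
next
  fix a x y assume x: "x \<in> T k" and y: "y \<in> T k"
  show "(\<lambda>k. a * x k + y k) \<in> T k"
    using x y subspD[OF subsp_lcs] subspD[OF subsp_vecs]
    unfolding T_def by (auto simp: P1_lin p2_lin)
qed

lemma lcs_T: "1 \<le> k \<Longrightarrow> lcs MM cc k \<subseteq> T k"
proof (induction k rule: dec_induct)
  case base
  have h: "lie_br MM cc x y \<in> T 1" for x y
      unfolding T_def using br_MM_vecs br_gen0 br_lcs1[OF P1_vecs P1_vecs] br_lcs1[OF p2_vecs p2_vecs]
      by (simp add: P1_br p2_br)
  show ?case unfolding One_nat_def lcs.simps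
    by (rule cspan_sub[OF subsp_T]) (use h in auto)
next
  case (step k)
  have h: "lie_br MM cc x y \<in> T (Suc k)" if x: "x \<in> vecs MM" and y: "y \<in> lcs MM cc k" for x y
  proof -
    have yT: "y \<in> T k" using step.IH y by blast
    have "P1 (lie_br MM cc x y) \<in> lcs m1 c1 (Suc k)"
      unfolding P1_br lcs.simps by (rule cspan_mem) (use yT P1_vecs in \<open>auto simp: T_def\<close>)
    moreover have "p2 (lie_br MM cc x y) \<in> lcs m2 c2 (Suc k)"
      unfolding p2_br lcs.simps by (rule cspan_mem) (use yT p2_vecs in \<open>auto simp: T_def\<close>)
    moreover have p3: "P3 (lie_br MM cc x y) = 0"
      by (rule P3_br_gen) (use yT in \<open>auto simp: T_def\<close>)
    have "lie_br MM cc x y j = 0" if "m1 + m2 \<le> j" for j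
      using fun_cong[OF p3, of j] that by (simp add: P3_def)
    ultimately show "lie_br MM cc x y \<in> T (Suc k)"
      unfolding T_def using br_MM_vecs br_gen0 by simp
  qed
  show ?case unfolding lcs.simps
    by (rule cspan_sub[OF subsp_T]) (use h in auto)
qed

lemma prod_nilpotent:
  assumes "lie_nilpotent m1 c1" "lie_nilpotent m2 c2"
  shows "lie_nilpotent MM cc"
proof -
  obtain a where a: "lcs m1 c1 a = {0}" using assms(1) by (auto simp: lie_nilpotent_def)
  obtain b where b: "lcs m2 c2 b = {0}" using assms(2) by (auto simp: lie_nilpotent_def)
  let ?K = "a + b + 2"
  have ea: "lcs m1 c1 ?K = {0}" using lcs_zero_persist[OF a, of "b + 2"] by (simp add: add.assoc)
  have eb: "lcs m2 c2 ?K = {0}" using lcs_zero_persist[OF b, of "a + 2"] by (simp add: algebra_simps)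
  have "lcs MM cc ?K \<subseteq> {0}"
  proof
    fix v assume "v \<in> lcs MM cc ?K"
    then have "v \<in> T ?K" using lcs_T[of ?K] by auto
    then have "v \<in> vecs MM" "P1 v = 0" "p2 v = 0" "P3 v = 0" using ea eb by (auto simp: T_def P3_def fun_eq_iff)
    then show "v \<in> {0}" using decomp[of v] by simp
  qed
  moreover have "0 \<in> lcs MM cc ?K" using subsp_lcs by (auto simp: subsp_def)
  ultimately show ?thesis unfolding lie_nilpotent_def by blast
qed

end


lemma is_derI:
  assumes "\<And>x. x \<in> vecs m \<Longrightarrow> D x \<in> vecs m"
    and "\<And>a x y. x \<in> vecs m \<Longrightarrow> y \<in> vecs m \<Longrightarrow> D (\<lambda>k. a * x k + y k) = (\<lambda>k. a * D x k + D y k)"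
    and "\<And>x y. x \<in> vecs m \<Longrightarrow> y \<in> vecs m \<Longrightarrow> D (lie_br m c x y) = lie_br m c (D x) y + lie_br m c x (D y)"
  shows "is_derivation m c D"
  using assms unfolding is_derivation_def by blast

locale PGD = PG +
  fixes k1 k2 :: nat
  assumes S: "\<And>D x. is_derivation (prod_dim m1 n1 m2 n2) (prod_gen m1 n1 c1 m2 n2 c2) D \<Longrightarrow>
       x \<in> vecs m1 \<Longrightarrow> proj2 m1 m2 (D x) \<in> cset m2 n2"
    and K1: "vecs m1 \<subseteq> klev m1 c1 k1" and K2: "vecs m2 \<subseteq> klev m2 c2 k2"
begin

abbreviation "Dr D \<equiv> is_derivation MM cc D"
abbreviation "L t \<equiv> klev MM cc t"

lemma D11_der: assumes d: "Dr D" shows "is_derivation m1 c1 (\<lambda>x. P1 (D x))"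
proof (rule is_derI)
  fix x show "P1 (D x) \<in> vecs m1" by (rule P1_vecs)
next
  fix a x y assume x: "x \<in> vecs m1" and y: "y \<in> vecs m1"
  show "P1 (D (\<lambda>k. a * x k + y k)) = (\<lambda>k. a * P1 (D x) k + P1 (D y) k)"
    using der_lin[OF d vecs_m1_MM[OF x] vecs_m1_MM[OF y]] by (simp add: P1_lin)
next
  fix x y assume x: "x \<in> vecs m1" and y: "y \<in> vecs m1"
  have "P1 (D (lie_br m1 c1 x y)) = P1 (D (lie_br MM cc x y))" by (simp add: E1[OF x y])
  also have "\<dots> = P1 (lie_br MM cc (D x) y + lie_br MM cc x (D y))"
    by (simp add: der_br[OF d vecs_m1_MM[OF x] vecs_m1_MM[OF y]])
  also have "\<dots> = lie_br m1 c1 (P1 (D x)) y + lie_br m1 c1 x (P1 (D y))"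
    by (simp add: P1_add P1_br P1_id[OF x] P1_id[OF y])
  finally show "P1 (D (lie_br m1 c1 x y)) = lie_br m1 c1 (P1 (D x)) y + lie_br m1 c1 x (P1 (D y))" .
qed

lemma D22_der: assumes d: "Dr D" shows "is_derivation m2 c2 (\<lambda>w. p2 (D (U w)))"
proof (rule is_derI)
  fix x show "p2 (D (U x)) \<in> vecs m2" by (rule p2_vecs)
next
  fix a x y assume x: "x \<in> vecs m2" and y: "y \<in> vecs m2"
  show "p2 (D (U (\<lambda>k. a * x k + y k))) = (\<lambda>k. a * p2 (D (U x)) k + p2 (D (U y)) k)"
    using der_lin[OF d U_vecs U_vecs, of a x y] by (simp add: p2_lin U_lin)
next
  fix x y assume x: "x \<in> vecs m2" and y: "y \<in> vecs m2"
  have "p2 (D (U (lie_br m2 c2 x y))) = p2 (D (lie_br MM cc (U x) (U y)))" by (simp add: E2[OF x y])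
  also have "\<dots> = p2 (lie_br MM cc (D (U x)) (U y) + lie_br MM cc (U x) (D (U y)))"
    by (simp add: der_br[OF d U_vecs U_vecs])
  also have "\<dots> = lie_br m2 c2 (p2 (D (U x))) y + lie_br m2 c2 x (p2 (D (U y)))"
    by (simp add: p2_add p2_br p2_U[OF x] p2_U[OF y])
  finally show "p2 (D (U (lie_br m2 c2 x y))) = lie_br m2 c2 (p2 (D (U x))) y + lie_br m2 c2 x (p2 (D (U y)))" .
qed

lemma exp_left1: "v \<in> vecs MM \<Longrightarrow> y \<in> vecs m1 \<Longrightarrow> p2 v \<in> cset m2 n2 \<Longrightarrow>
    lie_br MM cc v y = lie_br m1 c1 (P1 v) y"
proof -
  assume v: "v \<in> vecs MM" and y: "y \<in> vecs m1" and u: "p2 v \<in> cset m2 n2"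
  have "lie_br MM cc v y = lie_br MM cc (P1 v + U (p2 v) + P3 v) y" using decomp[OF v] by simp
  also have "\<dots> = lie_br MM cc (P1 v) y" by (simp add: br_add1 br_C2_1[OF u y])
  also have "\<dots> = lie_br m1 c1 (P1 v) y" by (rule E1[OF P1_vecs y])
  finally show ?thesis .
qed

lemma exp_right1: "v \<in> vecs MM \<Longrightarrow> x \<in> vecs m1 \<Longrightarrow>
    lie_br MM cc x v = lie_br m1 c1 x (P1 v) + lie_br MM cc x (U (p2 v))"
proof -
  assume v: "v \<in> vecs MM" and x: "x \<in> vecs m1"
  have "lie_br MM cc x v = lie_br MM cc x (P1 v + U (p2 v) + P3 v)" using decomp[OF v] by simp
  also have "\<dots> = lie_br MM cc x (P1 v) + lie_br MM cc x (U (p2 v))" by (simp add: br_add2)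
  also have "lie_br MM cc x (P1 v) = lie_br m1 c1 x (P1 v)" by (rule E1[OF x P1_vecs])
  finally show ?thesis .
qed

lemma exp_U2: "v \<in> vecs MM \<Longrightarrow> w \<in> vecs m2 \<Longrightarrow>
    lie_br MM cc v (U w) = lie_br MM cc (P1 v) (U w) + U (lie_br m2 c2 (p2 v) w)"
proof -
  assume v: "v \<in> vecs MM" and w: "w \<in> vecs m2"
  have "lie_br MM cc v (U w) = lie_br MM cc (P1 v + U (p2 v) + P3 v) (U w)" using decomp[OF v] by simp
  also have "\<dots> = lie_br MM cc (P1 v) (U w) + lie_br MM cc (U (p2 v)) (U w)" by (simp add: br_add1)
  also have "lie_br MM cc (U (p2 v)) (U w) = U (lie_br m2 c2 (p2 v) w)" by (rule E2[OF p2_vecs w])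
  finally show ?thesis .
qed

lemma exp_U1: "v \<in> vecs MM \<Longrightarrow> u \<in> cset m2 n2 \<Longrightarrow>
    lie_br MM cc (U u) v = U (lie_br m2 c2 u (p2 v))"
proof -
  assume v: "v \<in> vecs MM" and u: "u \<in> cset m2 n2"
  have uv: "u \<in> vecs m2" using u by (simp add: cset_def)
  have "lie_br MM cc (U u) v = lie_br MM cc (U u) (P1 v + U (p2 v) + P3 v)" using decomp[OF v] by simp
  also have "\<dots> = lie_br MM cc (U u) (U (p2 v))" by (simp add: br_add2 br_C2_1[OF u P1_vecs])
  also have "\<dots> = U (lie_br m2 c2 u (p2 v))" by (rule E2[OF uv p2_vecs])
  finally show ?thesis .
qed

lemma lcs2_cset: "lcs m2 c2 1 = cset m2 n2" by (rule adapted_lcs1[OF A2])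
lemma lcs1_cset: "lcs m1 c1 1 = cset m1 n1" by (rule adapted_lcs1[OF A1])

lemma DA: "Dr D \<Longrightarrow> y \<in> lcs m1 c1 1 \<Longrightarrow> D y \<in> vecs m1"
proof -
  assume d: "Dr D" and y: "y \<in> lcs m1 c1 1"
  let ?S = "{v \<in> vecs MM. D v \<in> vecs m1}"
  have "subsp ?S" unfolding subsp_def
  proof (intro conjI allI impI)
    show "0 \<in> ?S" using der_zero[OF d] by (simp add: vecs_def)
    fix a x y assume "x \<in> ?S" "y \<in> ?S"
    then show "(\<lambda>k. a * x k + y k) \<in> ?S" using der_lin[OF d] subspD[OF subsp_vecs] by auto
  qed
  moreover have "lie_br m1 c1 x z \<in> ?S" if x: "x \<in> vecs m1" and z: "z \<in> vecs m1" for x z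
  proof -
    have e: "lie_br m1 c1 x z = lie_br MM cc x z" by (simp add: E1[OF x z])
    have "D (lie_br MM cc x z) = lie_br MM cc (D x) z + lie_br MM cc x (D z)"
      by (rule der_br[OF d vecs_m1_MM[OF x] vecs_m1_MM[OF z]])
    also have "lie_br MM cc (D x) z = lie_br m1 c1 (P1 (D x)) z"
      by (rule exp_left1[OF der_vec[OF d vecs_m1_MM[OF x]] z S[OF d x]])
    also have "lie_br MM cc x (D z) = - lie_br MM cc (D z) x"
      by (rule br_antisym) (use cc_anti in blast)
    also have "lie_br MM cc (D z) x = lie_br m1 c1 (P1 (D z)) x"
      by (rule exp_left1[OF der_vec[OF d vecs_m1_MM[OF z]] x S[OF d z]])
    finally have "D (lie_br MM cc x z) = lie_br m1 c1 (P1 (D x)) z + - lie_br m1 c1 (P1 (D z)) x" .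
    moreover have "lie_br m1 c1 (P1 (D x)) z \<in> vecs m1" "lie_br m1 c1 (P1 (D z)) x \<in> vecs m1"
      using br_vecs[OF L1] by auto
    ultimately have "D (lie_br MM cc x z) \<in> vecs m1" by (simp add: vecs_def)
    then show ?thesis using e br_MM_vecs by simp
  qed
  ultimately have "cspan {lie_br m1 c1 x z | x z. x \<in> vecs m1 \<and> z \<in> lcs m1 c1 0} \<subseteq> ?S"
    by (intro cspan_sub) auto
  then show ?thesis using y unfolding One_nat_def lcs.simps by auto
qed

lemma DC: "Dr D \<Longrightarrow> u \<in> lcs m2 c2 1 \<Longrightarrow> P1 (D (U u)) = 0"
proof -
  assume d: "Dr D" and u: "u \<in> lcs m2 c2 1"
  let ?S = "{v \<in> vecs m2. P1 (D (U v)) = 0}"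
  have "subsp ?S" unfolding subsp_def
  proof (intro conjI allI impI)
    have "D 0 = 0" by (rule der_zero[OF d])
    then show "0 \<in> ?S" by (simp add: vecs_def)
    fix a x y assume "x \<in> ?S" "y \<in> ?S"
    then show "(\<lambda>k. a * x k + y k) \<in> ?S"
      using der_lin[OF d U_vecs U_vecs] subspD[OF subsp_vecs] by (auto simp: U_lin P1_lin)
  qed
  moreover have "lie_br m2 c2 x z \<in> ?S" if x: "x \<in> vecs m2" and z: "z \<in> vecs m2" for x z
  proof -
    have "P1 (D (U (lie_br m2 c2 x z))) = P1 (D (lie_br MM cc (U x) (U z)))" by (simp add: E2[OF x z])
    also have "\<dots> = P1 (lie_br MM cc (D (U x)) (U z) + lie_br MM cc (U x) (D (U z)))"
      by (simp add: der_br[OF d U_vecs U_vecs])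
    also have "\<dots> = 0" by (simp add: P1_add P1_br)
    finally show ?thesis using br_vecs[OF L2] by simp
  qed
  ultimately have "cspan {lie_br m2 c2 x z | x z. x \<in> vecs m2 \<and> z \<in> lcs m2 c2 0} \<subseteq> ?S"
    by (intro cspan_sub) auto
  then show ?thesis using u unfolding One_nat_def lcs.simps by auto
qed

end


context PGD begin

lemma L_add: "x \<in> L t \<Longrightarrow> y \<in> L t \<Longrightarrow> x + y \<in> L t"
  by (rule subsp_add[OF subsp_klev])
lemma L_zero: "0 \<in> klev m c t"
  using subsp_klev unfolding subsp_def by blast
lemma L_mono: "y \<in> klev m c a \<Longrightarrow> a \<le> b \<Longrightarrow> y \<in> klev m c b"
  using klev_mono by blast

lemma d1_step: "Dr D \<Longrightarrow> y \<in> klev m1 c1 (Suc a) \<Longrightarrow> P1 (D y) \<in> klev m1 c1 a"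
  using klev_step[OF D11_der] by simp
lemma d2_step: "Dr D \<Longrightarrow> y \<in> klev m2 c2 (Suc a) \<Longrightarrow> p2 (D (U y)) \<in> klev m2 c2 a"
  using klev_step[OF D22_der] by simp
lemma d1_lcs: "Dr D \<Longrightarrow> y \<in> lcs m1 c1 1 \<Longrightarrow> P1 (D y) \<in> lcs m1 c1 1"
  using der_lcs1[OF L1 A1 D11_der] by simp
lemma d2_lcs: "Dr D \<Longrightarrow> y \<in> lcs m2 c2 1 \<Longrightarrow> p2 (D (U y)) \<in> lcs m2 c2 1"
  using der_lcs1[OF L2 A2 D22_der] by simp

lemma LA: "y \<in> lcs m1 c1 1 \<Longrightarrow> y \<in> klev m1 c1 a \<Longrightarrow> y \<in> L a"
proof (induction a arbitrary: y)
  case 0 then show ?case using klev_0 L_zero by blast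
next
  case (Suc a)
  show ?case
  proof (rule klev_intro)
    show "y \<in> vecs MM" using vecs_m1_MM klev_vecs Suc.prems by blast
    fix D assume d: "Dr D"
    have e: "D y = P1 (D y)" using P1_id[OF DA[OF d Suc.prems(1)]] by simp
    have "P1 (D y) \<in> L a"
      by (rule Suc.IH[OF d1_lcs[OF d Suc.prems(1)] d1_step[OF d Suc.prems(2)]])
    then show "D y \<in> L a" using e by simp
  qed
qed

lemma LC: "a + b = n \<Longrightarrow> u \<in> lcs m2 c2 1 \<Longrightarrow> u \<in> klev m2 c2 a \<Longrightarrow> w \<in> klev m2 c2 b \<Longrightarrow>
   U (lie_br m2 c2 u w) \<in> L n"
proof (induction n arbitrary: a b u w)
  case 0
  then have "u = 0" using klev_0 by auto
  then show ?case using L_zero[of MM cc 0] br_zero1[of m2 c2 w] U_zero by metis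
next
  case (Suc n)
  show ?case
  proof (cases "a = 0 \<or> b = 0")
    case True
    then have "u = 0 \<or> w = 0" using klev_0 Suc.prems by auto
    then show ?thesis using L_zero[of MM cc "Suc n"] br_zero1[of m2 c2 w] br_zero2[of m2 c2 u] U_zero by metis
  next
    case False
    then obtain a' b' where ab: "a = Suc a'" "b = Suc b'" by (metis not0_implies_Suc)
    have u2: "u \<in> vecs m2" "u \<in> cset m2 n2" using Suc.prems(2) lcs2_cset by (auto simp: cset_def)
    have w2: "w \<in> vecs m2" using Suc.prems(4) klev_vecs by blast
    show ?thesis
    proof (rule klev_intro[OF U_vecs])
      fix D assume d: "Dr D"
      have "D (U (lie_br m2 c2 u w)) = D (lie_br MM cc (U u) (U w))" by (simp add: E2[OF u2(1) w2])
      also have "\<dots> = lie_br MM cc (D (U u)) (U w) + lie_br MM cc (U u) (D (U w))"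
        by (rule der_br[OF d U_vecs U_vecs])
      also have "lie_br MM cc (D (U u)) (U w) = U (lie_br m2 c2 (p2 (D (U u))) w)"
        using exp_U2[OF der_vec[OF d U_vecs] w2] DC[OF d Suc.prems(2)] by simp
      also have "lie_br MM cc (U u) (D (U w)) = U (lie_br m2 c2 u (p2 (D (U w))))"
        by (rule exp_U1[OF der_vec[OF d U_vecs] u2(2)])
      finally have e: "D (U (lie_br m2 c2 u w)) = U (lie_br m2 c2 (p2 (D (U u))) w) + U (lie_br m2 c2 u (p2 (D (U w))))" .
      have 1: "U (lie_br m2 c2 (p2 (D (U u))) w) \<in> L n"
        by (rule Suc.IH[of a' b]) (use ab Suc.prems d2_lcs[OF d] d2_step[OF d] in auto)
      have 2: "U (lie_br m2 c2 u (p2 (D (U w)))) \<in> L n"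
        by (rule Suc.IH[of a b']) (use ab Suc.prems d2_step[OF d] in auto)
      show "D (U (lie_br m2 c2 u w)) \<in> L n" using e L_add[OF 1 2] by simp
    qed
  qed
qed

definition "cB = k1 + k2 + k2"

lemma LB: "a + b = n \<Longrightarrow> x \<in> klev m1 c1 a \<Longrightarrow> w \<in> klev m2 c2 b \<Longrightarrow>
   lie_br MM cc x (U w) \<in> L (n + cB)"
proof (induction n arbitrary: a b x w)
  case 0
  then have "x = 0" using klev_0 by auto
  then show ?case using L_zero[of MM cc "0 + cB"] br_zero1[of MM cc "U w"] by metis
next
  case (Suc n)
  show ?case
  proof (cases "a = 0 \<or> b = 0")
    case True
    then have "x = 0 \<or> w = 0" using klev_0 Suc.prems by auto
    then show ?thesis using L_zero[of MM cc "Suc n + cB"] br_zero1[of MM cc "U w"] br_zero2[of MM cc x] U_zero by metis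
  next
    case False
    then obtain a' b' where ab: "a = Suc a'" "b = Suc b'" by (metis not0_implies_Suc)
    have x1: "x \<in> vecs m1" using Suc.prems(2) klev_vecs by blast
    have w2: "w \<in> vecs m2" using Suc.prems(3) klev_vecs by blast
    show ?thesis unfolding add_Suc
    proof (rule klev_intro[OF br_MM_vecs])
      fix D assume d: "Dr D"
      have "D (lie_br MM cc x (U w)) = lie_br MM cc (D x) (U w) + lie_br MM cc x (D (U w))"
        by (rule der_br[OF d vecs_m1_MM[OF x1] U_vecs])
      also have "lie_br MM cc (D x) (U w) = lie_br MM cc (P1 (D x)) (U w) + U (lie_br m2 c2 (p2 (D x)) w)"
        by (rule exp_U2[OF der_vec[OF d vecs_m1_MM[OF x1]] w2])
      also have "lie_br MM cc x (D (U w)) = lie_br m1 c1 x (P1 (D (U w))) + lie_br MM cc x (U (p2 (D (U w))))"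
        by (rule exp_right1[OF der_vec[OF d U_vecs] x1])
      finally have e: "D (lie_br MM cc x (U w)) = lie_br MM cc (P1 (D x)) (U w) + U (lie_br m2 c2 (p2 (D x)) w)
          + (lie_br m1 c1 x (P1 (D (U w))) + lie_br MM cc x (U (p2 (D (U w)))))" .
      have 1: "lie_br MM cc (P1 (D x)) (U w) \<in> L (n + cB)"
        by (rule Suc.IH[of a' b]) (use ab Suc.prems d1_step[OF d] in auto)
      have "U (lie_br m2 c2 (p2 (D x)) w) \<in> L (k2 + k2)"
        by (rule LC) (use S[OF d x1] lcs2_cset K2 p2_vecs w2 in auto)
      then have 2: "U (lie_br m2 c2 (p2 (D x)) w) \<in> L (n + cB)"
        by (rule L_mono) (simp add: cB_def)
      have "lie_br m1 c1 x (P1 (D (U w))) \<in> L k1"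
        by (rule LA) (use br_lcs1[OF x1 P1_vecs] K1 br_vecs[OF L1] in auto)
      then have 3: "lie_br m1 c1 x (P1 (D (U w))) \<in> L (n + cB)"
        by (rule L_mono) (simp add: cB_def)
      have 4: "lie_br MM cc x (U (p2 (D (U w)))) \<in> L (n + cB)"
        by (rule Suc.IH[of a b']) (use ab Suc.prems d2_step[OF d] in auto)
      show "D (lie_br MM cc x (U w)) \<in> L (n + cB)"
        using e L_add[OF L_add[OF 1 2] L_add[OF 3 4]] by simp
    qed
  qed
qed

lemma U_unit: "j < m2 \<Longrightarrow> U (unitv j) = unitv (m1 + j)"
  by (auto simp: U_def unitv_def fun_eq_iff)

lemma unit3: "i < n1 \<Longrightarrow> j < n2 \<Longrightarrow> lie_br MM cc (unitv i) (U (unitv j)) = unitv (m1 + m2 + i * n2 + j)"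
proof -
  assume i: "i < n1" and j: "j < n2"
  have iM: "i < MM" "m1 + j < MM" using i j n1m1 n2m2 by (auto simp: MM_eq)
  show ?thesis
  proof
    fix k
    have "lie_br MM cc (unitv i) (U (unitv j)) k = cc i (m1 + j) k"
      using iM j n2m2 by (simp add: U_unit br_unit)
    also have "\<dots> = unitv (m1 + m2 + i * n2 + j) k"
      using i j n1m1 by (auto simp: prod_gen_def unitv_def)
    finally show "lie_br MM cc (unitv i) (U (unitv j)) k = unitv (m1 + m2 + i * n2 + j) k" .
  qed
qed

definition "cV = k1 + k2 + cB"

lemma LV: "z \<in> vecs MM \<Longrightarrow> (\<And>k. k < m1 + m2 \<Longrightarrow> z k = 0) \<Longrightarrow> z \<in> L cV"
proof -
  assume z: "z \<in> vecs MM" and lo: "\<And>k. k < m1 + m2 \<Longrightarrow> z k = 0"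
  have "z \<in> cspan (unitv ` {m1 + m2..<MM})"
    by (rule cspan_unit) (use z lo in \<open>auto simp: vecs_def\<close>)
  moreover have "unitv ` {m1 + m2..<MM} \<subseteq> L cV"
  proof
    fix v assume "v \<in> unitv ` {m1 + m2..<MM}"
    then obtain k where v: "v = unitv k" and k: "m1 + m2 \<le> k" "k < MM" by auto
    define q where "q = k - (m1 + m2)"
    have q: "q < n1 * n2" using k by (simp add: q_def MM_eq)
    then have n2: "0 < n2" by (cases n2) auto
    have i: "q div n2 < n1" using q by (simp add: less_mult_imp_div_less)
    have j: "q mod n2 < n2" using n2 by simp
    have kq: "k = m1 + m2 + (q div n2) * n2 + q mod n2" using k by (simp add: q_def)
    have "unitv (q div n2) \<in> klev m1 c1 k1" using K1 i n1m1 by (auto simp: vecs_def unitv_def)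
    moreover have "unitv (q mod n2) \<in> klev m2 c2 k2" using K2 j n2m2 by (auto simp: vecs_def unitv_def)
    ultimately have "lie_br MM cc (unitv (q div n2)) (U (unitv (q mod n2))) \<in> L (k1 + k2 + cB)"
      by (intro LB) auto
    then show "v \<in> L cV" using unit3[OF i j] v kq by (simp add: cV_def)
  qed
  ultimately show ?thesis using cspan_sub[OF subsp_klev] by blast
qed

lemma LP3: "v \<in> vecs MM \<Longrightarrow> P3 v \<in> L cV"
  by (rule LV) (auto simp: P3_vecs P3_low)

lemma LE: "u \<in> lcs m2 c2 1 \<Longrightarrow> u \<in> klev m2 c2 a \<Longrightarrow> U u \<in> L (a + cV)"
proof (induction a arbitrary: u)
  case 0 then show ?case using klev_0[OF 0(2)] L_zero[of MM cc "0 + cV"] U_zero by metis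
next
  case (Suc a)
  show ?case unfolding add_Suc
  proof (rule klev_intro[OF U_vecs])
    fix D assume d: "Dr D"
    have "D (U u) = P1 (D (U u)) + U (p2 (D (U u))) + P3 (D (U u))"
      by (rule decomp[OF der_vec[OF d U_vecs]])
    then have e: "D (U u) = U (p2 (D (U u))) + P3 (D (U u))" using DC[OF d Suc.prems(1)] by simp
    have 1: "U (p2 (D (U u))) \<in> L (a + cV)"
      by (rule Suc.IH[OF d2_lcs[OF d Suc.prems(1)] d2_step[OF d Suc.prems(2)]])
    have 2: "P3 (D (U u)) \<in> L (a + cV)"
      by (rule L_mono[OF LP3[OF der_vec[OF d U_vecs]]]) simp
    show "D (U u) \<in> L (a + cV)" using e L_add[OF 1 2] by simp
  qed
qed

definition "cD = k2 + cV"

lemma LD: "x \<in> klev m1 c1 a \<Longrightarrow> x \<in> L (a + cD)"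
proof (induction a arbitrary: x)
  case 0 then show ?case using klev_0[OF 0(1)] L_zero[of MM cc "0 + cD"] by metis
next
  case (Suc a)
  have x1: "x \<in> vecs m1" using Suc.prems klev_vecs by blast
  show ?case unfolding add_Suc
  proof (rule klev_intro[OF vecs_m1_MM[OF x1]])
    fix D assume d: "Dr D"
    have dv: "D x \<in> vecs MM" by (rule der_vec[OF d vecs_m1_MM[OF x1]])
    have e: "D x = P1 (D x) + U (p2 (D x)) + P3 (D x)" by (rule decomp[OF dv])
    have 1: "P1 (D x) \<in> L (a + cD)" by (rule Suc.IH[OF d1_step[OF d Suc.prems]])
    have "U (p2 (D x)) \<in> L (k2 + cV)"
      by (rule LE) (use S[OF d x1] lcs2_cset K2 p2_vecs in auto)
    then have 2: "U (p2 (D x)) \<in> L (a + cD)" by (rule L_mono) (simp add: cD_def)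
    have 3: "P3 (D x) \<in> L (a + cD)" by (rule L_mono[OF LP3[OF dv]]) (simp add: cD_def)
    show "D x \<in> L (a + cD)" using e L_add[OF L_add[OF 1 2] 3] by simp
  qed
qed

definition "cF = k1 + cD"

lemma LF: "w \<in> klev m2 c2 b \<Longrightarrow> U w \<in> L (b + cF)"
proof (induction b arbitrary: w)
  case 0 then show ?case using klev_0[OF 0(1)] L_zero[of MM cc "0 + cF"] U_zero by metis
next
  case (Suc b)
  show ?case unfolding add_Suc
  proof (rule klev_intro[OF U_vecs])
    fix D assume d: "Dr D"
    have dv: "D (U w) \<in> vecs MM" by (rule der_vec[OF d U_vecs])
    have e: "D (U w) = P1 (D (U w)) + U (p2 (D (U w))) + P3 (D (U w))" by (rule decomp[OF dv])
    have "P1 (D (U w)) \<in> L (k1 + cD)" by (rule LD) (use K1 P1_vecs in auto)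
    then have 1: "P1 (D (U w)) \<in> L (b + cF)" by (rule L_mono) (simp add: cF_def)
    have 2: "U (p2 (D (U w))) \<in> L (b + cF)" by (rule Suc.IH[OF d2_step[OF d Suc.prems]])
    have 3: "P3 (D (U w)) \<in> L (b + cF)" by (rule L_mono[OF LP3[OF dv]]) (simp add: cF_def cD_def)
    show "D (U w) \<in> L (b + cF)" using e L_add[OF L_add[OF 1 2] 3] by simp
  qed
qed

lemma L_all: "vecs MM \<subseteq> L (k1 + cD + k2 + cF + cV)"
proof
  fix v assume v: "v \<in> vecs MM"
  have e: "v = P1 v + U (p2 v) + P3 v" by (rule decomp[OF v])
  have "P1 v \<in> L (k1 + cD)" by (rule LD) (use K1 P1_vecs in auto)
  then have 1: "P1 v \<in> L (k1 + cD + k2 + cF + cV)" by (rule L_mono) simp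
  have "U (p2 v) \<in> L (k2 + cF)" by (rule LF) (use K2 p2_vecs in auto)
  then have 2: "U (p2 v) \<in> L (k1 + cD + k2 + cF + cV)" by (rule L_mono) simp
  have 3: "P3 v \<in> L (k1 + cD + k2 + cF + cV)" by (rule L_mono[OF LP3[OF v]]) simp
  show "v \<in> L (k1 + cD + k2 + cF + cV)" using e L_add[OF L_add[OF 1 2] 3] by simp
qed

end

theorem mainTheorem1:
  fixes m1 n1 m2 n2 :: nat
    and c1 c2 :: "nat \<Rightarrow> nat \<Rightarrow> nat \<Rightarrow> complex"
  assumes "is_lie_alg m1 c1" "lie_nilpotent m1 c1" "lie_nonabelian m1 c1" "adapted m1 n1 c1"
    and "is_lie_alg m2 c2" "lie_nilpotent m2 c2" "lie_nonabelian m2 c2" "adapted m2 n2 c2"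
    and "char_nilpotent m1 c1" "char_nilpotent m2 c2"
    and "S_algebra m1 n1 c1" "S_algebra m2 n2 c2"
  shows "char_nilpotent (prod_dim m1 n1 m2 n2) (prod_gen m1 n1 c1 m2 n2 c2)"
proof -
  obtain k1 where k1: "k1 \<ge> 1" "der_series m1 c1 k1 = {0}" using assms(9) unfolding char_nilpotent_def by blast
  obtain k2 where k2: "k2 \<ge> 1" "der_series m2 c2 k2 = {0}" using assms(10) unfolding char_nilpotent_def by blast
  interpret PG m1 n1 c1 m2 n2 c2 using assms by unfold_locales
  have S: "proj2 m1 m2 (D x) \<in> cset m2 n2"
    if "is_derivation (prod_dim m1 n1 m2 n2) (prod_gen m1 n1 c1 m2 n2 c2) D" "x \<in> vecs m1" for D x
  proof -
    have "proj2 m1 m2 (D x) \<in> lcs m2 c2 1"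
      using assms(11) assms(5-8) that unfolding S_algebra_def by blast
    then show ?thesis using adapted_lcs1[OF assms(8)] by simp
  qed
  interpret PGD m1 n1 c1 m2 n2 c2 k1 k2
    by unfold_locales (use S klev_top[OF k1(2)] klev_top[OF k2(2)] in auto)
  have "der_series MM cc (k1 + cD + k2 + cF + cV) = {0}" by (rule der_series_final[OF L_all])
  moreover have "k1 + cD + k2 + cF + cV \<ge> 1" using k1 by simp
  ultimately show ?thesis
    unfolding char_nilpotent_def using prod_lie prod_nilpotent[OF assms(2) assms(6)] by blast
qed

end
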